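(* Let $n\ge 1$ and $d$ be positive integers, and define $a_1=d$ and $a_k=d\big(1+\sum_{j=1}^{k-1}a_j\big)$ for every integer $k\in\{2,\dots,n\}$. Let $\mathbf{z}=(z_0,z_1,\dots,z_n)\in\mathbb{R}\times[0,d]^n$. Then every integer vector $\mathbf{x}=(x_0,\dots,x_n)\in\mathbb{Z}\times([0,d]\cap\mathbb{Z})^n$ with $\mathbf{x}\le_L\mathbf{z}$ satisfies the linear inequalities $$x_i+\sum_{j=0}^{i-1}a_{i-j}\,(x_j-\lceil z_j\rceil)\le \lfloor z_i\rfloor\qquad\text{for all } i\in\{0,\dots,n\},$$ where for $i=0$ the sum is empty (equal to $0$).
   Context: For $\mathbf{x},\mathbf{y}\in\mathbb{R}^{n+1}$, $\mathbf{x}=(x_0,\dots,x_n)$ is lexicographically lower than $\mathbf{y}=(y_0,\dots,y_n)$, written $\mathbf{x}<_L\mathbf{y}$, if there is $k\in\{0,\dots,n\}$ with $x_k<y_k$ and $x_i=y_i$ for all $i<k$; $\mathbf{x}\le_L\mathbf{y}$ means $\mathbf{x}<_L\mathbf{y}$ or $\mathbf{x}=\mathbf{y}$. *)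

theory Defs
  imports Complex_Main
begin

text \<open>The sequence a_1 = d, a_k = d (1 + sum_{j=1}^{k-1} a_j). Index 0 is unused (set to 0).\<close>
fun seq_a :: "int \<Rightarrow> nat \<Rightarrow> int" where
  "seq_a d 0 = 0"
| "seq_a d (Suc k) = d * (1 + (\<Sum>j\<in>{1..k}. seq_a d j))"

text \<open>Lexicographic order on vectors (x_0,...,x_n) in R^(n+1), represented as functions nat => real
  of which only the indices 0..n are relevant.\<close>
definition lex_less :: "nat \<Rightarrow> (nat \<Rightarrow> real) \<Rightarrow> (nat \<Rightarrow> real) \<Rightarrow> bool" where
  "lex_less n x y \<longleftrightarrow> (\<exists>k\<le>n. x k < y k \<and> (\<forall>i<k. x i = y i))"

definition lex_le :: "nat \<Rightarrow> (nat \<Rightarrow> real) \<Rightarrow> (nat \<Rightarrow> real) \<Rightarrow> bool" where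
  "lex_le n x y \<longleftrightarrow> lex_less n x y \<or> (\<forall>i\<le>n. x i = y i)"

end

theory Submission
  imports Defs
begin

lemma seq_a_nonneg: "d \<ge> 0 \<Longrightarrow> seq_a d k \<ge> 0"
proof (induction k rule: less_induct)
  case (less k)
  then show ?case
  proof (cases k)
    case (Suc p)
    have "(\<Sum>j\<in>{1..p}. seq_a d j) \<ge> 0"
      using less Suc by (intro sum_nonneg) auto
    then show ?thesis using Suc less.prems by simp
  qed simp
qed

lemma reidx: "(\<Sum>j\<in>{Suc k..<k + Suc p}. f (k + Suc p - j)) = (\<Sum>t\<in>{1..p}. (f t :: int))"
  by (rule sum.reindex_bij_witness[of _ "\<lambda>t. k + Suc p - t" "\<lambda>j. k + Suc p - j"]) auto

theorem proposition3:
  fixes n :: nat and d :: int and z :: "nat \<Rightarrow> real" and x :: "nat \<Rightarrow> int"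
  assumes "n \<ge> 1" and "d \<ge> 1"
    and "\<forall>i\<in>{1..n}. 0 \<le> z i \<and> z i \<le> real_of_int d"
    and "\<forall>i\<in>{1..n}. 0 \<le> x i \<and> x i \<le> d"
    and "lex_le n (\<lambda>i. real_of_int (x i)) z"
  shows "\<forall>i\<le>n. x i + (\<Sum>j<i. seq_a d (i - j) * (x j - \<lceil>z j\<rceil>)) \<le> \<lfloor>z i\<rfloor>"
proof (intro allI impI)
  fix i assume i: "i \<le> n"
  have eqcase: "x i + (\<Sum>j<i. seq_a d (i - j) * (x j - \<lceil>z j\<rceil>)) \<le> \<lfloor>z i\<rfloor>"
    if h: "\<forall>j\<le>i. real_of_int (x j) = z j"
  proof -
    have "(\<Sum>j<i. seq_a d (i - j) * (x j - \<lceil>z j\<rceil>)) = 0"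
      using h by (intro sum.neutral) (metis ceiling_of_int diff_self lessThan_iff less_imp_le mult_zero_right)
    moreover have "\<lfloor>z i\<rfloor> = x i" using h by (metis floor_of_int order_refl)
    ultimately show ?thesis by simp
  qed
  show "x i + (\<Sum>j<i. seq_a d (i - j) * (x j - \<lceil>z j\<rceil>)) \<le> \<lfloor>z i\<rfloor>"
  proof (cases "\<forall>j\<le>n. real_of_int (x j) = z j")
    case True
    then show ?thesis using i by (intro eqcase) auto
  next
    case False
    then obtain k where k: "k \<le> n" "real_of_int (x k) < z k" "\<forall>j<k. real_of_int (x j) = z j"
      using assms(5) unfolding lex_le_def lex_less_def by auto
    consider "i < k" | "i = k" | "k < i" by linarith
    then show ?thesis
    proof cases
      case 1 then show ?thesis using k by (intro eqcase) auto
    next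
      case 2
      have "(\<Sum>j<i. seq_a d (i - j) * (x j - \<lceil>z j\<rceil>)) = 0"
        using k 2 by (intro sum.neutral) (metis ceiling_of_int diff_self lessThan_iff mult_zero_right)
      moreover have "x i \<le> \<lfloor>z i\<rfloor>" using k 2 by (simp add: le_floor_iff)
      ultimately show ?thesis by simp
    next
      case 3
      define p where "p = i - k - 1"
      have ip: "i = k + Suc p" using 3 unfolding p_def by simp
      have a0: "\<And>t. seq_a d t \<ge> 0" using assms(2) seq_a_nonneg by simp
      have xk: "x k - \<lceil>z k\<rceil> \<le> -1"
        proof -
        have "x k < \<lceil>z k\<rceil>" using k(2) by (simp add: less_ceiling_iff)
        then show ?thesis by linarith
      qed
      have "(\<Sum>j<i. seq_a d (i - j) * (x j - \<lceil>z j\<rceil>)) =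
            (\<Sum>j<Suc k. seq_a d (i - j) * (x j - \<lceil>z j\<rceil>))
            + (\<Sum>j\<in>{Suc k..<k + Suc p}. seq_a d (i - j) * (x j - \<lceil>z j\<rceil>))"
        using sum.atLeastLessThan_concat[of 0 "Suc k" i "\<lambda>j. seq_a d (i - j) * (x j - \<lceil>z j\<rceil>)"] ip
        by (simp add: atLeast0LessThan)
      then have "(\<Sum>j<i. seq_a d (i - j) * (x j - \<lceil>z j\<rceil>)) =
            (\<Sum>j<k. seq_a d (i - j) * (x j - \<lceil>z j\<rceil>)) + seq_a d (i - k) * (x k - \<lceil>z k\<rceil>)
            + (\<Sum>j\<in>{Suc k..<k + Suc p}. seq_a d (i - j) * (x j - \<lceil>z j\<rceil>))"
        by simp
      moreover have "(\<Sum>j<k. seq_a d (i - j) * (x j - \<lceil>z j\<rceil>)) = 0"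
        using k by (intro sum.neutral) (metis ceiling_of_int diff_self lessThan_iff mult_zero_right)
      moreover have "seq_a d (i - k) * (x k - \<lceil>z k\<rceil>) \<le> - seq_a d (Suc p)"
        using xk a0[of "Suc p"] ip
        using mult_left_mono[OF xk a0[of "Suc p"]] by simp
      moreover have "(\<Sum>j\<in>{Suc k..<k + Suc p}. seq_a d (i - j) * (x j - \<lceil>z j\<rceil>))
          \<le> (\<Sum>j\<in>{Suc k..<k + Suc p}. seq_a d (k + Suc p - j) * d)"
      proof (rule sum_mono)
        fix j assume j: "j \<in> {Suc k..<k + Suc p}"
        then have "j \<in> {1..n}" using ip i by auto
        then have "0 \<le> z j" "x j \<le> d" using assms(3,4) by auto
        moreover have "0 \<le> \<lceil>z j\<rceil>" using \<open>0 \<le> z j\<close> by simp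
        ultimately have "x j - \<lceil>z j\<rceil> \<le> d" by linarith
        then show "seq_a d (i - j) * (x j - \<lceil>z j\<rceil>) \<le> seq_a d (k + Suc p - j) * d"
          using a0[of "i - j"] ip by (simp add: mult_left_mono)
      qed
      moreover have "(\<Sum>j\<in>{Suc k..<k + Suc p}. seq_a d (k + Suc p - j) * d) = d * (\<Sum>t\<in>{1..p}. seq_a d t)"
        using reidx[of "\<lambda>t. seq_a d t * d" k p] by (simp add: sum_distrib_left mult.commute)
      moreover have "x i \<le> d" "0 \<le> \<lfloor>z i\<rfloor>"
        using assms(3,4) i ip by auto
      moreover have "seq_a d (Suc p) = d + d * (\<Sum>t\<in>{1..p}. seq_a d t)"
        by (simp add: algebra_simps)
      ultimately show ?thesis by linarith
    qed
  qed
qed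

end
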